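(* Suppose $(a_i)_{i=1}^n$, $(b_i)_{i=1}^n$, $(a'_i)_{i=1}^n$, $(b'_i)_{i=1}^n$ are sequences of complex numbers and $A, B, \epsilon$ are positive real numbers with $\epsilon < \min(1/A, 1/e)$, such that $\sum_{i=1}^n |a_i| e^{|b_i|} \le B$ and for all $i$: (1) $2|a_i| e^{|b_i|+1} \le A$; (2) $|b_i - b'_i| < \epsilon$; (3) $|a_i - a'_i| < \epsilon |a_i|$. Then $$\Big\| \prod_{i=1}^n Y(b_i) X(a_i) Y(-b_i) - \prod_{i=1}^n Y(b'_i) X(a'_i) Y(-b'_i) \Big\| \le 12\, e^{A+2B} B \epsilon.$$
   Context: For a matrix $U \in \mathfrak{sl}_2(\mathbb{C})$ and $t\in\mathbb{C}$, $U(t)$ denotes $\exp(tU)\in\mathrm{SL}_2(\mathbb{C})$. Let $X = \begin{pmatrix} 1/2 & 0 \\ 0 & -1/2 \end{pmatrix}$, $\theta = \begin{pmatrix} 0 & -1/2 \\ 1/2 & 0\end{pmatrix}$, and $Y = e^{(\pi/2)\mathrm{ad}_\theta} X = \theta(\pi/2) X \theta(-\pi/2)$. All matrices are regarded as elements of $M_2(\mathbb{C})$, and $\|\cdot\|$ is the operator norm with respect to the standard Hermitian ($L^2$) norm on $\mathbb{C}^2$. *)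

theory Defs
  imports "HOL-Analysis.Analysis"
begin

type_synonym cmat = "complex^2^2"

fun mpow :: "cmat \<Rightarrow> nat \<Rightarrow> cmat" where
  "mpow U 0 = mat 1"
| "mpow U (Suc k) = U ** mpow U k"

definition mexp :: "cmat \<Rightarrow> cmat" where
  "mexp U = (\<Sum>k. inverse (fact k) *\<^sub>R mpow U k)"

definition csmul :: "complex \<Rightarrow> cmat \<Rightarrow> cmat" where
  "csmul c U = (\<chi> i j. c * U$i$j)"

definition mflow :: "cmat \<Rightarrow> complex \<Rightarrow> cmat" where
  "mflow U t = mexp (csmul t U)"

definition Xm :: cmat where
  "Xm = (\<chi> i j. if i = 1 \<and> j = 1 then 1/2 else if i = 2 \<and> j = 2 then -1/2 else 0)"

definition thetam :: cmat where
  "thetam = (\<chi> i j. if i = 1 \<and> j = 2 then -1/2 else if i = 2 \<and> j = 1 then 1/2 else 0)"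

definition Ym :: cmat where
  "Ym = mflow thetam (of_real (pi/2)) ** Xm ** mflow thetam (of_real (-pi/2))"

text \<open>Operator norm w.r.t. the standard Hermitian (L2) norm on C^2.\<close>
definition opnorm :: "cmat \<Rightarrow> real" where
  "opnorm M = onorm (\<lambda>x. M *v x)"

definition oprod :: "(nat \<Rightarrow> cmat) \<Rightarrow> nat \<Rightarrow> cmat" where
  "oprod f n = foldr (\<lambda>i M. f i ** M) [1..<n+1] (mat 1)"

end

theory Submission
  imports Defs
begin

definition mk :: "complex \<Rightarrow> complex \<Rightarrow> complex \<Rightarrow> complex \<Rightarrow> cmat" where
  "mk p q r s = (\<chi> i j. if i = 1 then (if j = 1 then p else q) else (if j = 1 then r else s))"

lemma two_ne: "(1::2) \<noteq> 2" "(2::2) \<noteq> 1" by simp_all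

lemma mk_nth [simp]: "mk p q r s $ 1 $ 1 = p" "mk p q r s $ 1 $ 2 = q"
  "mk p q r s $ 2 $ 1 = r" "mk p q r s $ 2 $ 2 = s"
  by (simp_all add: mk_def)

lemma mk_eta: "M = mk (M$1$1) (M$1$2) (M$2$1) (M$2$2)"
  unfolding vec_eq_iff forall_2 by simp

lemma mk_eq_iff: "mk p q r s = mk p2 q2 r2 s2 \<longleftrightarrow> p = p2 \<and> q = q2 \<and> r = r2 \<and> s = s2"
  unfolding vec_eq_iff forall_2 by simp

lemma mk_mult: "mk p q r s ** mk p2 q2 r2 s2 = mk (p*p2 + q*r2) (p*q2 + q* s2) (r*p2 + s*r2) (r*q2+ s* s2)"
  unfolding vec_eq_iff forall_2 by (simp add: matrix_matrix_mult_def sum_2)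

lemma mk_add: "mk p q r s + mk p2 q2 r2 s2 = mk (p+p2) (q+q2) (r+r2) (s+s2)"
  unfolding vec_eq_iff forall_2 by simp

lemma mk_diff: "mk p q r s - mk p2 q2 r2 s2 = mk (p-p2) (q-q2) (r-r2) (s-s2)"
  unfolding vec_eq_iff forall_2 by simp

lemma mk_csmul: "csmul c (mk p q r s) = mk (c*p) (c*q) (c*r) (c* s)"
  unfolding vec_eq_iff forall_2 by (simp add: csmul_def)

lemma mk_scaleR: "x *\<^sub>R (mk p q r s) = mk (x *\<^sub>R p) (x *\<^sub>R q) (x *\<^sub>R r) (x *\<^sub>R s)"
  unfolding vec_eq_iff forall_2 by simp

lemma mat1_mk: "(mat 1 :: cmat) = mk 1 0 0 1"
  unfolding vec_eq_iff forall_2 by (simp add: mat_def)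

lemma zero_mk: "(0 :: cmat) = mk 0 0 0 0"
  unfolding vec_eq_iff forall_2 by simp

lemma Xm_mk: "Xm = mk (1/2) 0 0 (-1/2)"
  unfolding vec_eq_iff forall_2 by (simp add: Xm_def)

lemma thetam_mk: "thetam = mk 0 (-1/2) (1/2) 0"
  unfolding vec_eq_iff forall_2 by (simp add: thetam_def)

lemma norm_vec2: "norm (x :: complex^2) = sqrt ((cmod (x$1))\<^sup>2 + (cmod (x$2))\<^sup>2)"
  by (simp add: norm_vec_def L2_set_def sum_2)

lemma norm_mk: "norm (mk p q r s) = sqrt ((cmod p)\<^sup>2 + (cmod q)\<^sup>2 + (cmod r)\<^sup>2 + (cmod s)\<^sup>2)"
  by (simp add: norm_vec_def L2_set_def sum_2 add.assoc)

lemma mk_mulv: "mk p q r s *v x = (\<chi> i. if i = 1 then p * x$1 + q * x$2 else r * x$1 + s * x$2)"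
  unfolding vec_eq_iff forall_2 by (simp add: matrix_vector_mult_def sum_2)

lemma bl_mv: "bounded_linear (\<lambda>x. (M::cmat) *v x)"
  by simp

lemma opnorm_nonneg: "0 \<le> opnorm M"
  unfolding opnorm_def by (rule onorm_pos_le[OF bl_mv])

lemma opnorm_app: "norm (M *v x) \<le> opnorm M * norm x"
  unfolding opnorm_def by (rule onorm[OF bl_mv])

lemma opnorm_mult: "opnorm (M ** N) \<le> opnorm M * opnorm N"
proof -
  have "(\<lambda>x. (M ** N) *v x) = (\<lambda>x. M *v x) \<circ> (\<lambda>x. N *v x)"
    by (simp add: o_def matrix_vector_mul_assoc)
  then show ?thesis unfolding opnorm_def using onorm_compose[OF bl_mv bl_mv] by metis
qed

lemma opnorm_add: "opnorm (M + N) \<le> opnorm M + opnorm N"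
proof -
  have "(\<lambda>x. (M + N) *v x) = (\<lambda>x. M *v x + N *v x)"
    by (simp add: matrix_vector_mult_add_rdistrib)
  then show ?thesis unfolding opnorm_def using onorm_triangle[OF bl_mv bl_mv] by metis
qed

lemma opnorm_uminus: "opnorm (- M) = opnorm M"
proof -
  have "(\<lambda>x. (- M) *v x) = (\<lambda>x. - (M *v x))"
    by (rule ext) (simp add: vec_eq_iff matrix_vector_mult_def sum_negf)
  then show ?thesis unfolding opnorm_def using onorm_neg by metis
qed

lemma opnorm_diff: "opnorm (M - N) \<le> opnorm M + opnorm N"
  using opnorm_add[of M "- N"] opnorm_uminus[of N] by simp

lemma opnorm_one: "opnorm (mat 1) \<le> 1"
proof -
  have "((*v) (mat 1 :: cmat)) = (\<lambda>x. x)" by (rule ext) simp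
  then show ?thesis unfolding opnorm_def using onorm_id_le by simp
qed

lemma cs2: "(a*c + b*d)\<^sup>2 \<le> (a\<^sup>2 + b\<^sup>2) * (c\<^sup>2 + d\<^sup>2)" for a b c d :: real
proof -
  have "0 \<le> (a*d - b*c)\<^sup>2" by simp
  then show ?thesis by (simp add: power2_eq_square algebra_simps)
qed

lemma row_bound: "(cmod (p * x + q * y))\<^sup>2 \<le> ((cmod p)\<^sup>2 + (cmod q)\<^sup>2) * ((cmod x)\<^sup>2 + (cmod y)\<^sup>2)"
proof -
  have "cmod (p * x + q * y) \<le> cmod p * cmod x + cmod q * cmod y"
    by (metis norm_mult norm_triangle_ineq)
  then have "(cmod (p * x + q * y))\<^sup>2 \<le> (cmod p * cmod x + cmod q * cmod y)\<^sup>2"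
    by (simp add: power_mono)
  also have "\<dots> \<le> ((cmod p)\<^sup>2 + (cmod q)\<^sup>2) * ((cmod x)\<^sup>2 + (cmod y)\<^sup>2)" by (rule cs2)
  finally show ?thesis .
qed

lemma opnorm_le_norm: "opnorm M \<le> norm M"
proof -
  obtain p q r s where M: "M = mk p q r s" by (rule that[OF mk_eta])
  show ?thesis unfolding opnorm_def
  proof (rule onorm_le)
    fix x :: "complex^2"
    have "(norm (M *v x))\<^sup>2 = (cmod (p * x$1 + q * x$2))\<^sup>2 + (cmod (r * x$1 + s * x$2))\<^sup>2"
      by (simp add: M mk_mulv norm_vec2)
    also have "\<dots> \<le> ((cmod p)\<^sup>2 + (cmod q)\<^sup>2) * ((cmod (x$1))\<^sup>2 + (cmod (x$2))\<^sup>2)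
        + ((cmod r)\<^sup>2 + (cmod s)\<^sup>2) * ((cmod (x$1))\<^sup>2 + (cmod (x$2))\<^sup>2)"
      by (intro add_mono row_bound)
    also have "\<dots> = (norm M)\<^sup>2 * (norm x)\<^sup>2"
    proof -
      have nM: "(norm M)\<^sup>2 = (cmod p)\<^sup>2 + (cmod q)\<^sup>2 + (cmod r)\<^sup>2 + (cmod s)\<^sup>2"
        by (simp add: M norm_mk)
      have nx: "(norm x)\<^sup>2 = (cmod (x$1))\<^sup>2 + (cmod (x$2))\<^sup>2" by (simp add: norm_vec2)
      show ?thesis unfolding nM nx by (simp add: algebra_simps)
    qed
    also have "\<dots> = (norm M * norm x)\<^sup>2"
      by (simp add: power_mult_distrib)
    finally show "norm (M *v x) \<le> norm M * norm x"
      by (rule power2_le_imp_le) simp_all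
  qed
qed

lemma csmul_mv: "csmul c M *v x = (\<chi> i. c * (M *v x)$i)"
  by (simp add: vec_eq_iff matrix_vector_mult_def csmul_def sum_distrib_left mult.assoc)

lemma norm_csmul_mv: "norm (csmul c M *v x) = cmod c * norm (M *v x)"
  unfolding csmul_mv norm_vec_def
  by (simp add: norm_mult L2_set_right_distrib)

lemma opnorm_csmul: "opnorm (csmul c M) \<le> cmod c * opnorm M"
  unfolding opnorm_def
proof (rule onorm_le)
  fix x
  have "norm (csmul c M *v x) = cmod c * norm (M *v x)" by (rule norm_csmul_mv)
  also have "\<dots> \<le> cmod c * (onorm ((*v) M) * norm x)"
    using opnorm_app[of M x] unfolding opnorm_def by (simp add: mult_left_mono)
  finally show "norm (csmul c M *v x) \<le> cmod c * onorm ((*v) M) * norm x" by (simp add: mult.assoc)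
qed

lemma matrix_sub_ldistrib: "(M::cmat) ** (N - K) = M ** N - M ** K"
  by (simp add: vec_eq_iff matrix_matrix_mult_def sum_subtractf right_diff_distrib)

lemma matrix_sub_rdistrib: "((M::cmat) - N) ** K = M ** K - N ** K"
  by (simp add: vec_eq_iff matrix_matrix_mult_def sum_subtractf left_diff_distrib)

lemma csmul_mult_left: "csmul c M ** N = csmul c (M ** N)"
  by (simp add: vec_eq_iff matrix_matrix_mult_def csmul_def sum_distrib_left mult.assoc)

lemma csmul_mult_right: "M ** csmul c N = csmul c (M ** N)"
  by (simp add: vec_eq_iff matrix_matrix_mult_def csmul_def sum_distrib_left mult.left_commute)

lemma csmul_add: "csmul c (M + N) = csmul c M + csmul c N"
  by (simp add: vec_eq_iff csmul_def distrib_left)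

lemma csmul_diff: "csmul c (M - N) = csmul c M - csmul c N"
  by (simp add: vec_eq_iff csmul_def right_diff_distrib)

lemma csmul_csmul: "csmul c (csmul d M) = csmul (c * d) M"
  by (simp add: vec_eq_iff csmul_def mult.assoc)

lemma csmul_one: "csmul 1 M = M"
  by (simp add: vec_eq_iff csmul_def)

lemma csmul_addl: "csmul (c + d) M = csmul c M + csmul d M"
  by (simp add: vec_eq_iff csmul_def distrib_right)

lemma csmul_sum: "(\<Sum>k\<in>A. csmul (f k) M) = csmul (\<Sum>k\<in>A. f k) M"
  by (simp add: vec_eq_iff csmul_def sum_distrib_right)

lemma scaleR_csmul: "r *\<^sub>R csmul c M = csmul (r *\<^sub>R c) M"
  by (simp add: vec_eq_iff csmul_def mult_scaleR_left)

lemma csmul_tendsto: "(g \<longlongrightarrow> L) F \<Longrightarrow> ((\<lambda>n. csmul (g n) M) \<longlongrightarrow> csmul L M) F"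
  unfolding csmul_def by (intro tendsto_vec_lambda tendsto_mult_right)

lemma csmul_sums: "f sums L \<Longrightarrow> (\<lambda>k. csmul (f k) M) sums csmul L M"
  unfolding sums_def csmul_sum by (rule csmul_tendsto)

lemma mpow_invol:
  assumes W: "W ** W = mat 1"
  shows "mpow (csmul s W) k = csmul (s^k) (csmul (1/2) (mat 1 + W)) + csmul ((-s)^k) (csmul (1/2) (mat 1 - W))"
proof (induction k)
  case 0
  show ?case by (simp add: csmul_one vec_eq_iff csmul_def mat_def field_simps)
next
  case (Suc k)
  have WP: "W ** csmul (1/2) (mat 1 + W) = csmul (1/2) (mat 1 + W)"
    by (simp add: csmul_mult_right matrix_add_ldistrib W add.commute)
  have WQ: "W ** csmul (1/2) (mat 1 - W) = csmul (-1) (csmul (1/2) (mat 1 - W))"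
    by (simp add: csmul_mult_right matrix_sub_ldistrib W csmul_csmul)
       (simp add: vec_eq_iff csmul_def field_simps)
  show ?case
    apply (simp only: mpow.simps Suc matrix_add_ldistrib csmul_mult_left csmul_mult_right WP WQ csmul_csmul csmul_add)
    apply (simp add: W matrix_add_ldistrib matrix_sub_ldistrib)
    apply (simp add: vec_eq_iff csmul_def algebra_simps)
    done
qed

lemma mexp_invol:
  assumes W: "W ** W = mat 1"
  shows "mexp (csmul s W) = csmul (exp s) (csmul (1/2) (mat 1 + W)) + csmul (exp (-s)) (csmul (1/2) (mat 1 - W))"
proof -
  let ?P = "csmul (1/2) (mat 1 + W)" and ?Q = "csmul (1/2) (mat 1 - W)"
  have "(\<lambda>k. csmul (s^k /\<^sub>R fact k) ?P + csmul ((-s)^k /\<^sub>R fact k) ?Q) sums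
        (csmul (exp s) ?P + csmul (exp (-s)) ?Q)"
    by (intro sums_add csmul_sums exp_converges)
  moreover have "(\<lambda>k. inverse (fact k) *\<^sub>R mpow (csmul s W) k) =
     (\<lambda>k. csmul (s^k /\<^sub>R fact k) ?P + csmul ((-s)^k /\<^sub>R fact k) ?Q)"
    by (rule ext) (simp only: mpow_invol[OF W] scaleR_csmul scaleR_right_distrib)
  ultimately show ?thesis unfolding mexp_def by (simp add: sums_iff)
qed

lemma mflow_Xm: "mflow Xm t = mk (exp (t/2)) 0 0 (exp (-(t/2)))"
proof -
  have W: "mk 1 0 0 (-1) ** mk 1 0 0 (-1) = mat 1" by (simp add: mk_mult mat1_mk)
  have e: "csmul t Xm = csmul (t/2) (mk 1 0 0 (-1))" by (simp add: Xm_mk mk_csmul)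
  show ?thesis unfolding mflow_def e mexp_invol[OF W]
    by (simp add: mat1_mk mk_add mk_diff mk_csmul)
qed

lemma mflow_theta: "mflow thetam t = mk ((exp (-(\<i>*t/2)) + exp (\<i>*t/2))/2) (\<i>*(exp (\<i>*t/2) - exp (-(\<i>*t/2)))/2)
   (\<i>*(exp (-(\<i>*t/2)) - exp (\<i>*t/2))/2) ((exp (-(\<i>*t/2)) + exp (\<i>*t/2))/2)"
proof -
  have W: "mk 0 (-\<i>) \<i> 0 ** mk 0 (-\<i>) \<i> 0 = mat 1" by (simp add: mk_mult mat1_mk)
  have ii: "\<i> * t * \<i> = - t" 
    by (metis complex_i_mult_minus mult.commute mult.left_commute)
  have e: "csmul t thetam = csmul (-(\<i>*t/2)) (mk 0 (-\<i>) \<i> 0)" by (simp add: thetam_mk mk_csmul mk_eq_iff ii)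
  show ?thesis unfolding mflow_def e mexp_invol[OF W]
    by (simp add: mat1_mk mk_add mk_diff mk_csmul mk_eq_iff algebra_simps)
qed

lemma mflow_W3: "mflow (mk 0 (1/2) (1/2) 0) t = mk ((exp (t/2) + exp (-(t/2)))/2) ((exp (t/2) - exp (-(t/2)))/2)
   ((exp (t/2) - exp (-(t/2)))/2) ((exp (t/2) + exp (-(t/2)))/2)"
proof -
  have W: "mk 0 1 1 0 ** mk 0 1 1 0 = mat 1" by (simp add: mk_mult mat1_mk)
  have e: "csmul t (mk 0 (1/2) (1/2) 0) = csmul (t/2) (mk 0 1 1 0)" by (simp add: mk_csmul)
  show ?thesis unfolding mflow_def e mexp_invol[OF W]
    by (simp add: mat1_mk mk_add mk_diff mk_csmul mk_eq_iff algebra_simps)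
qed

lemma Ym_mk: "Ym = mk 0 (1/2) (1/2) 0"
proof -
  define r where "r = sqrt 2 / 2"
  have rr: "r * r = 1/2" by (simp add: r_def)
  have c1: "exp (\<i> * complex_of_real (pi/2) / 2) = of_real r * (1 + \<i>)"
  proof -
    have "exp (\<i> * complex_of_real (pi/2) / 2) = cis (pi/4)" by (simp add: cis_conv_exp)
    also have "\<dots> = of_real r * (1 + \<i>)" by (simp add: complex_eq_iff cos_45 sin_45 r_def)
    finally show ?thesis .
  qed
  have c2: "exp (-(\<i> * complex_of_real (pi/2) / 2)) = of_real r * (1 - \<i>)"
  proof -
    have "exp (-(\<i> * complex_of_real (pi/2) / 2)) = cis (-(pi/4))" by (simp add: cis_conv_exp)
    also have "\<dots> = of_real r * (1 - \<i>)" by (simp add: complex_eq_iff cos_45 sin_45 r_def)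
    finally show ?thesis .
  qed
  have c3: "exp (\<i> * complex_of_real (-pi/2) / 2) = of_real r * (1 - \<i>)" using c2 by simp
  have c4: "exp (-(\<i> * complex_of_real (-pi/2) / 2)) = of_real r * (1 + \<i>)" using c1 by simp
  have rr': "complex_of_real r * complex_of_real r = 1/2" by (metis of_real_mult rr of_real_divide of_real_1 of_real_numeral)
  show ?thesis unfolding Ym_def mflow_theta c1 c2 c3 c4 Xm_mk mk_mult mk_eq_iff
    by (simp add: algebra_simps rr')
qed

lemma P_explicit: "mflow Ym b ** mflow Xm a ** mflow Ym (-b) =
  mk (cosh(a/2) + sinh(a/2)*cosh b) (-(sinh(a/2)* sinh b)) (sinh(a/2)* sinh b) (cosh(a/2) - sinh(a/2)*cosh b)"
proof -
  define u where "u = exp (b/2)"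
  define v where "v = exp (a/2)"
  have u0: "u \<noteq> 0" and v0: "v \<noteq> 0" by (simp_all add: u_def v_def)
  have e1: "exp (-(b/2)) = inverse u" by (simp add: u_def exp_minus)
  have e2: "exp b = u * u" by (simp add: u_def flip: exp_add)
  have e3: "exp (-b) = inverse (u * u)" by (simp add: exp_minus e2)
  have f1: "exp (-(a/2)) = inverse v" by (simp add: v_def exp_minus)
  have f2: "exp (a/2) = v" by (simp add: v_def)
  have f3: "exp (b/2) = u" by (simp add: u_def)
  have ch: "cosh (a/2) = (v + inverse v)/2" by (simp add: cosh_field_def f1 f2)
  have sh: "sinh (a/2) = (v - inverse v)/2" by (simp add: sinh_field_def f1 f2)
  have C: "cosh b = (u*u + inverse (u*u))/2" by (simp add: cosh_field_def e2 e3)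
  have S: "sinh b = (u*u - inverse (u*u))/2" by (simp add: sinh_field_def e2 e3)
  show ?thesis unfolding Ym_mk mflow_W3 mflow_Xm mk_mult mk_eq_iff ch sh C S
    by (simp add: e1 f1 f2 f3 field_simps u0 v0) (simp add: algebra_simps)?
qed

lemma norm_exp_sub1: "cmod (exp w - 1) \<le> exp (cmod w) - 1"
proof -
  let ?h = "\<lambda>n. w^n /\<^sub>R fact n - (if n = 0 then 1 else 0)"
  let ?g = "\<lambda>n. (cmod w)^n /\<^sub>R fact n - (if n = 0 then 1 else 0)"
  have s1: "?h sums (exp w - 1)"
    by (intro sums_diff exp_converges) (rule sums_single[of 0 "\<lambda>_. 1", simplified])
  have s2: "?g sums (exp (cmod w) - 1)"
    by (intro sums_diff exp_converges) (rule sums_single[of 0 "\<lambda>_. 1", simplified])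
  have "\<And>n. norm (?h n) \<le> ?g n"
    by (simp add: norm_power)
  then have "norm (suminf ?h) \<le> suminf ?g"
    by (rule norm_suminf_le) (use s2 in \<open>simp add: sums_iff\<close>)
  then show ?thesis using s1 s2 by (simp add: sums_iff)
qed

lemma exp_sub1_le: "0 \<le> x \<Longrightarrow> exp x - 1 \<le> x * exp (x::real)"
proof -
  assume x: "0 \<le> x"
  have "1 - x \<le> exp (-x)" using exp_ge_add_one_self[of "-x"] by simp
  then have "(1 - x) * exp x \<le> exp (-x) * exp x" by (simp add: mult_right_mono)
  also have "\<dots> = 1" by (simp flip: exp_add)
  finally show ?thesis by (simp add: algebra_simps)
qed

lemma norm_exp_sub1': "cmod (exp w - 1) \<le> cmod w * exp (cmod w)"
  using norm_exp_sub1[of w] exp_sub1_le[of "cmod w"] by simp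

lemma norm_exp_diff: "cmod (exp u - exp v) \<le> cmod (u - v) * exp (cmod (u - v) + cmod v)"
proof -
  have "exp u - exp v = exp v * (exp (u - v) - 1)"
    by (simp add: algebra_simps flip: exp_add)
  then have "cmod (exp u - exp v) = cmod (exp v) * cmod (exp (u - v) - 1)"
    by (simp add: norm_mult)
  also have "\<dots> \<le> exp (cmod v) * (cmod (u - v) * exp (cmod (u - v)))"
    by (intro mult_mono norm_exp norm_exp_sub1') simp_all
  also have "\<dots> = cmod (u - v) * exp (cmod (u - v) + cmod v)"
    by (simp add: exp_add)
  finally show ?thesis .
qed

lemma norm_cosh_diff: "cmod (cosh u - cosh v) \<le> cmod (u - v) * exp (cmod (u - v) + cmod v)"
proof -
  have eq: "cosh u - cosh v = ((exp u - exp v) + (exp (-u) - exp (-v))) / 2"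
    by (simp add: cosh_field_def field_simps)
  have "cmod (cosh u - cosh v) = cmod ((exp u - exp v) + (exp (-u) - exp (-v))) / 2"
    unfolding eq by (simp add: norm_divide)
  also have "\<dots> \<le> (cmod (exp u - exp v) + cmod (exp (-u) - exp (-v))) / 2"
    by (intro divide_right_mono norm_triangle_ineq) simp
  also have "\<dots> \<le> (cmod (u - v) * exp (cmod (u - v) + cmod v) + cmod (-u - -v) * exp (cmod (-u - -v) + cmod (-v))) / 2"
    by (intro divide_right_mono add_mono norm_exp_diff) simp
  also have "\<dots> = cmod (u - v) * exp (cmod (u - v) + cmod v)"
    by (simp add: norm_minus_commute[of u v])
  finally show ?thesis .
qed

lemma norm_sinh_diff: "cmod (sinh u - sinh v) \<le> cmod (u - v) * exp (cmod (u - v) + cmod v)"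
proof -
  have eq: "sinh u - sinh v = ((exp u - exp v) - (exp (-u) - exp (-v))) / 2"
    by (simp add: sinh_field_def field_simps)
  have "cmod (sinh u - sinh v) = cmod ((exp u - exp v) - (exp (-u) - exp (-v))) / 2"
    unfolding eq by (simp add: norm_divide)
  also have "\<dots> \<le> (cmod (exp u - exp v) + cmod (exp (-u) - exp (-v))) / 2"
    by (intro divide_right_mono norm_triangle_ineq4) simp
  also have "\<dots> \<le> (cmod (u - v) * exp (cmod (u - v) + cmod v) + cmod (-u - -v) * exp (cmod (-u - -v) + cmod (-v))) / 2"
    by (intro divide_right_mono add_mono norm_exp_diff) simp
  also have "\<dots> = cmod (u - v) * exp (cmod (u - v) + cmod v)"
    by (simp add: norm_minus_commute[of u v])
  finally show ?thesis .
qed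

lemma norm_sinh_le': "cmod (sinh w) \<le> cmod w * exp (cmod w)"
  using norm_sinh_diff[of w 0] by simp

lemma norm_sinh_le: "cmod (sinh w) \<le> sinh (cmod w)"
proof -
  have s1: "(\<lambda>n. if even n then 0 else w ^ n /\<^sub>R fact n) sums sinh w" by (rule sinh_converges)
  have s2: "(\<lambda>n. if even n then 0 else (cmod w) ^ n /\<^sub>R fact n) sums sinh (cmod w)" by (rule sinh_converges)
  have "norm (suminf (\<lambda>n. if even n then 0 else w ^ n /\<^sub>R fact n)) \<le> suminf (\<lambda>n. if even n then 0 else (cmod w) ^ n /\<^sub>R fact n)"
    by (rule norm_suminf_le) (use s2 in \<open>simp_all add: sums_iff norm_power\<close>)
  then show ?thesis using s1 s2 by (simp add: sums_iff)
qed

lemma norm_cosh_le: "cmod (cosh w) \<le> cosh (cmod w)"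
proof -
  have s1: "(\<lambda>n. if even n then w ^ n /\<^sub>R fact n else 0) sums cosh w" by (rule cosh_converges)
  have s2: "(\<lambda>n. if even n then (cmod w) ^ n /\<^sub>R fact n else 0) sums cosh (cmod w)" by (rule cosh_converges)
  have "norm (suminf (\<lambda>n. if even n then w ^ n /\<^sub>R fact n else 0)) \<le> suminf (\<lambda>n. if even n then (cmod w) ^ n /\<^sub>R fact n else 0)"
    by (rule norm_suminf_le) (use s2 in \<open>simp_all add: sums_iff norm_power\<close>)
  then show ?thesis using s1 s2 by (simp add: sums_iff)
qed

lemma sinh_le_real: "0 \<le> y \<Longrightarrow> sinh y \<le> y * exp (y::real)"
proof -
  assume y: "0 \<le> y"
  have "1 - 2*y \<le> exp (-(2*y))" using exp_ge_add_one_self[of "-(2*y)"] by simp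
  then have "(1 - 2*y) * exp y \<le> exp (-(2*y)) * exp y" by (simp add: mult_right_mono)
  also have "exp (-(2*y)) * exp y = exp (-y)" by (simp flip: exp_add)
  finally show ?thesis by (simp add: sinh_def algebra_simps)
qed

lemma cosh_sinh_exp: "0 \<le> y \<Longrightarrow> 1 \<le> z \<Longrightarrow> cosh y + z * sinh y \<le> exp (z * (y::real))"
proof -
  assume y: "0 \<le> y" and z: "1 \<le> z"
  have "cosh y + z * sinh y = exp y + (z - 1) * sinh y"
    by (simp add: cosh_field_def sinh_field_def field_simps)
  also have "\<dots> \<le> exp y + (z - 1) * (y * exp y)"
    using sinh_le_real[OF y] z by (simp add: mult_left_mono)
  also have "\<dots> = exp y * (1 + (z - 1) * y)" by (simp add: algebra_simps)
  also have "\<dots> \<le> exp y * exp ((z - 1) * y)"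
    by (intro mult_left_mono) (use exp_ge_add_one_self in auto)
  also have "\<dots> = exp (z * y)" by (simp add: algebra_simps flip: exp_add)
  finally show ?thesis .
qed

definition Zp :: "complex \<Rightarrow> cmat" where
  "Zp b = mk (cosh b) (- sinh b) (sinh b) (- cosh b)"

definition Pm :: "complex \<Rightarrow> complex \<Rightarrow> cmat" where
  "Pm a b = mflow Ym b ** mflow Xm a ** mflow Ym (-b)"

lemma Pm_decomp: "Pm a b = csmul (cosh (a/2)) (mat 1) + csmul (sinh (a/2)) (Zp b)"
  unfolding Pm_def P_explicit Zp_def mat1_mk mk_csmul mk_add by (simp add: mk_eq_iff)

lemma cosh_sinh_sq: "(cosh x)\<^sup>2 + (sinh x)\<^sup>2 \<le> (exp (x::real))\<^sup>2" if "0 \<le> x"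
proof -
  have e: "exp (-x) * exp x = 1" by (simp flip: exp_add)
  have "(cosh x)\<^sup>2 + (sinh x)\<^sup>2 = ((exp x)\<^sup>2 + (exp (-x))\<^sup>2) / 2"
    by (simp add: cosh_field_def sinh_field_def power2_eq_square field_simps)
  also have "\<dots> \<le> (exp x)\<^sup>2"
  proof -
    have "exp (-x) \<le> exp x" using that by simp
    then have "(exp (-x))\<^sup>2 \<le> (exp x)\<^sup>2" by (intro power_mono) simp_all
    then show ?thesis by simp
  qed
  finally show ?thesis .
qed

lemma norm_Zp: "norm (Zp b) \<le> sqrt 2 * exp (cmod b)"
proof -
  let ?x = "cmod b"
  have C: "(cmod (cosh b))\<^sup>2 \<le> (cosh ?x)\<^sup>2" by (intro power_mono norm_cosh_le) simp
  have S: "(cmod (sinh b))\<^sup>2 \<le> (sinh ?x)\<^sup>2" by (intro power_mono norm_sinh_le) simp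
  have "norm (Zp b) = sqrt (2 * ((cmod (cosh b))\<^sup>2 + (cmod (sinh b))\<^sup>2))"
    by (simp add: Zp_def norm_mk)
  also have "\<dots> \<le> sqrt (2 * (exp ?x)\<^sup>2)"
  proof -
    have "2 * ((cmod (cosh b))\<^sup>2 + (cmod (sinh b))\<^sup>2) \<le> 2 * (exp ?x)\<^sup>2"
      using order_trans[OF add_mono[OF C S] cosh_sinh_sq[of ?x, OF norm_ge_zero]] by (rule mult_left_mono) simp
    then show ?thesis by (rule real_sqrt_le_mono)
  qed
  also have "\<dots> = sqrt 2 * exp ?x" by (simp add: real_sqrt_mult)
  finally show ?thesis .
qed

lemma opnorm_Pm: "opnorm (Pm a b) \<le> exp (cmod a * exp (cmod b) * sqrt 2 / 2)"
proof -
  let ?y = "cmod a / 2" and ?z = "sqrt 2 * exp (cmod b)"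
  have z1: "1 \<le> ?z"
  proof -
    have "1 \<le> sqrt 2" by simp
    moreover have "1 \<le> exp (cmod b)" by simp
    ultimately show ?thesis using mult_mono[of 1 "sqrt 2" 1 "exp (cmod b)"] by simp
  qed
  have "opnorm (Pm a b) \<le> opnorm (csmul (cosh (a/2)) (mat 1)) + opnorm (csmul (sinh (a/2)) (Zp b))"
    unfolding Pm_decomp by (rule opnorm_add)
  also have "\<dots> \<le> cmod (cosh (a/2)) * 1 + cmod (sinh (a/2)) * ?z"
  proof (intro add_mono)
    show "opnorm (csmul (cosh (a/2)) (mat 1)) \<le> cmod (cosh (a/2)) * 1"
      using opnorm_csmul[of "cosh (a/2)" "mat 1"] opnorm_one
      by (meson mult_left_mono norm_ge_zero order_trans)
    have "opnorm (Zp b) \<le> ?z" using opnorm_le_norm norm_Zp order_trans by blast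
    then show "opnorm (csmul (sinh (a/2)) (Zp b)) \<le> cmod (sinh (a/2)) * ?z"
      using opnorm_csmul[of "sinh (a/2)" "Zp b"]
      by (meson mult_left_mono norm_ge_zero order_trans)
  qed
  also have "\<dots> \<le> cosh ?y + ?z * sinh ?y"
  proof -
    have "cmod (cosh (a/2)) \<le> cosh ?y" using norm_cosh_le[of "a/2"] by (simp add: norm_divide)
    moreover have "cmod (sinh (a/2)) \<le> sinh ?y" using norm_sinh_le[of "a/2"] by (simp add: norm_divide)
    ultimately show ?thesis using z1 by (simp add: mult.commute mult_left_mono add_mono)
  qed
  also have "\<dots> \<le> exp (?z * ?y)" by (rule cosh_sinh_exp) (use z1 in simp_all)
  also have "?z * ?y = cmod a * exp (cmod b) * sqrt 2 / 2" by simp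
  finally show ?thesis .
qed

lemma Pm_diff:
  assumes ha: "cmod (a - a') \<le> \<epsilon> * cmod a" and hb: "cmod (b - b') \<le> \<epsilon>"
    and e0: "0 \<le> \<epsilon>" and e1: "\<epsilon> \<le> 1/2"
  shows "opnorm (Pm a b - Pm a' b') \<le> 5 * \<epsilon> * cmod a * exp (cmod b) * exp (cmod a)"
proof -
  define E where "E = exp (cmod a)"
  define F where "F = exp (cmod b)"
  have F1: "1 \<le> F" and E0: "0 \<le> E" by (simp_all add: F_def E_def)
  have expe: "exp \<epsilon> \<le> 2" using exp_half_le2 e1 by (meson exp_le_cancel_iff order_trans)
  have dec: "Pm a b - Pm a' b' = csmul (cosh (a/2) - cosh (a'/2)) (mat 1)
      + csmul (sinh (a/2)) (Zp b - Zp b') + csmul (sinh (a/2) - sinh (a'/2)) (Zp b')"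
    unfolding Pm_decomp Zp_def mat1_mk mk_csmul mk_add mk_diff by (simp add: mk_eq_iff algebra_simps)
  have cs: "opnorm (csmul c M) \<le> cmod c * norm M" for c M
    using opnorm_csmul[of c M] opnorm_le_norm[of M] by (meson mult_left_mono norm_ge_zero order_trans)
  have "opnorm (Pm a b - Pm a' b') \<le> opnorm (csmul (cosh (a/2) - cosh (a'/2)) (mat 1))
      + opnorm (csmul (sinh (a/2)) (Zp b - Zp b')) + opnorm (csmul (sinh (a/2) - sinh (a'/2)) (Zp b'))"
    unfolding dec by (meson add_mono opnorm_add order_refl order_trans)
  also have "\<dots> \<le> cmod (cosh (a/2) - cosh (a'/2)) * 1 + cmod (sinh (a/2)) * norm (Zp b - Zp b')
      + cmod (sinh (a/2) - sinh (a'/2)) * norm (Zp b')"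
  proof (intro add_mono cs)
    show "opnorm (csmul (cosh (a/2) - cosh (a'/2)) (mat 1)) \<le> cmod (cosh (a/2) - cosh (a'/2)) * 1"
      using opnorm_csmul[of "cosh (a/2) - cosh (a'/2)" "mat 1"] opnorm_one
      by (meson mult_left_mono norm_ge_zero order_trans)
  qed
  also have "\<dots> \<le> (\<epsilon> * cmod a / 2 * E) * 1 + (cmod a / 2 * E) * (4 * \<epsilon> * F) + (\<epsilon> * cmod a / 2 * E) * (4 * F)"
  proof -
    have da: "cmod (a'/2 - a/2) \<le> \<epsilon> * cmod a / 2"
    proof -
      have "cmod (a'/2 - a/2) = cmod (a - a') / 2"
        by (metis norm_minus_commute diff_divide_distrib norm_divide norm_numeral)
      then show ?thesis using ha by simp
    qed
    have ex: "exp (cmod (a'/2 - a/2) + cmod (a/2)) \<le> E"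
    proof -
      have "\<epsilon> * cmod a \<le> 1 * cmod a" using e1 by (intro mult_right_mono) simp_all
      then have "cmod (a'/2 - a/2) + cmod (a/2) \<le> cmod a" using da by (simp add: norm_divide)
      then show ?thesis unfolding E_def by simp
    qed
    have b1: "cmod (cosh (a/2) - cosh (a'/2)) \<le> \<epsilon> * cmod a / 2 * E"
    proof -
      have "cmod (cosh (a/2) - cosh (a'/2)) \<le> cmod (a'/2 - a/2) * exp (cmod (a'/2 - a/2) + cmod (a/2))"
        using norm_cosh_diff[of "a'/2" "a/2"] by (simp add: norm_minus_commute)
      also have "\<dots> \<le> \<epsilon> * cmod a / 2 * E" by (intro mult_mono da ex) (simp_all add: e0)
      finally show ?thesis .
    qed
    have b3: "cmod (sinh (a/2) - sinh (a'/2)) \<le> \<epsilon> * cmod a / 2 * E"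
    proof -
      have "cmod (sinh (a/2) - sinh (a'/2)) \<le> cmod (a'/2 - a/2) * exp (cmod (a'/2 - a/2) + cmod (a/2))"
        using norm_sinh_diff[of "a'/2" "a/2"] by (simp add: norm_minus_commute)
      also have "\<dots> \<le> \<epsilon> * cmod a / 2 * E" by (intro mult_mono da ex) (simp_all add: e0)
      finally show ?thesis .
    qed
    have bsh: "cmod (sinh (a/2)) \<le> cmod a / 2 * E"
    proof -
      have "cmod (sinh (a/2)) \<le> cmod (a/2) * exp (cmod (a/2))" by (rule norm_sinh_le')
      also have "\<dots> \<le> cmod a / 2 * E" unfolding E_def
        by (intro mult_mono) (simp_all add: norm_divide)
      finally show ?thesis .
    qed
    have dC: "cmod (cosh b - cosh b') \<le> 2 * \<epsilon> * F"
    proof -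
      have "cmod (cosh b - cosh b') \<le> cmod (b' - b) * exp (cmod (b' - b) + cmod b)"
        using norm_cosh_diff[of b' b] by (simp add: norm_minus_commute)
      also have "\<dots> \<le> \<epsilon> * (2 * F)"
      proof (intro mult_mono)
        show "cmod (b' - b) \<le> \<epsilon>" using hb by (simp add: norm_minus_commute)
        have "exp (cmod (b' - b) + cmod b) \<le> exp (\<epsilon> + cmod b)"
          using hb by (simp add: norm_minus_commute)
        also have "\<dots> = exp \<epsilon> * F" by (simp add: F_def exp_add)
        also have "\<dots> \<le> 2 * F" using expe F1 by (intro mult_right_mono) simp_all
        finally show "exp (cmod (b' - b) + cmod b) \<le> 2 * F" .
      qed (simp_all add: e0)
      finally show ?thesis by simp
    qed
    have dS: "cmod (sinh b - sinh b') \<le> 2 * \<epsilon> * F"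
    proof -
      have "cmod (sinh b - sinh b') \<le> cmod (b' - b) * exp (cmod (b' - b) + cmod b)"
        using norm_sinh_diff[of b' b] by (simp add: norm_minus_commute)
      also have "\<dots> \<le> \<epsilon> * (2 * F)"
      proof (intro mult_mono)
        show "cmod (b' - b) \<le> \<epsilon>" using hb by (simp add: norm_minus_commute)
        have "exp (cmod (b' - b) + cmod b) \<le> exp (\<epsilon> + cmod b)"
          using hb by (simp add: norm_minus_commute)
        also have "\<dots> = exp \<epsilon> * F" by (simp add: F_def exp_add)
        also have "\<dots> \<le> 2 * F" using expe F1 by (intro mult_right_mono) simp_all
        finally show "exp (cmod (b' - b) + cmod b) \<le> 2 * F" .
      qed (simp_all add: e0)
      finally show ?thesis by simp
    qed
    have b2: "norm (Zp b - Zp b') \<le> 4 * \<epsilon> * F"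
    proof -
      have "norm (Zp b - Zp b') = sqrt (2 * (cmod (cosh b - cosh b'))\<^sup>2 + 2 * (cmod (sinh b - sinh b'))\<^sup>2)"
        unfolding Zp_def mk_diff norm_mk by (simp add: norm_minus_commute[of "sinh b'"] norm_minus_commute[of "cosh b'"])
      also have "\<dots> \<le> sqrt ((4 * \<epsilon> * F)\<^sup>2)"
      proof (rule real_sqrt_le_mono)
        have "(cmod (cosh b - cosh b'))\<^sup>2 \<le> (2 * \<epsilon> * F)\<^sup>2" by (intro power_mono dC) simp
        moreover have "(cmod (sinh b - sinh b'))\<^sup>2 \<le> (2 * \<epsilon> * F)\<^sup>2" by (intro power_mono dS) simp
        ultimately show "2 * (cmod (cosh b - cosh b'))\<^sup>2 + 2 * (cmod (sinh b - sinh b'))\<^sup>2 \<le> (4 * \<epsilon> * F)\<^sup>2"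
          by (simp add: power2_eq_square algebra_simps)
      qed
      also have "\<dots> = 4 * \<epsilon> * F" using e0 F1 by simp
      finally show ?thesis .
    qed
    have b4: "norm (Zp b') \<le> 4 * F"
    proof -
      have "norm (Zp b') \<le> sqrt 2 * exp (cmod b')" by (rule norm_Zp)
      also have "\<dots> \<le> 2 * (exp \<epsilon> * F)"
      proof (intro mult_mono)
        show "sqrt 2 \<le> 2" using real_sqrt_le_mono[of 2 "2\<^sup>2"] by simp
        have "cmod b' \<le> \<epsilon> + cmod b" using hb norm_triangle_sub[of b' b]
          by (simp add: norm_minus_commute)
        then show "exp (cmod b') \<le> exp \<epsilon> * F" by (simp add: F_def flip: exp_add)
      qed simp_all
      also have "\<dots> \<le> 2 * (2 * F)" using expe F1 by (intro mult_left_mono mult_right_mono) simp_all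
      finally show ?thesis by simp
    qed
    show ?thesis
      by (intro add_mono mult_mono b1 b2 b3 b4 bsh order_refl) (simp_all add: e0 E0)
  qed
  also have "\<dots> = \<epsilon> * cmod a * E * (1/2 + 4 * F)" by (simp add: algebra_simps)
  also have "\<dots> \<le> \<epsilon> * cmod a * E * (5 * F)"
    using F1 e0 E0 by (intro mult_left_mono) simp_all
  also have "\<dots> = 5 * \<epsilon> * cmod a * exp (cmod b) * exp (cmod a)" by (simp add: E_def F_def)
  finally show ?thesis .
qed

lemma Pm_Q:
  assumes ha: "cmod (a - a') \<le> \<epsilon> * cmod a" and hb: "cmod (b - b') \<le> \<epsilon>"
    and e0: "0 \<le> \<epsilon>" and eE: "\<epsilon> \<le> 1 / exp 1"
  shows "opnorm (Pm a' b') \<le> exp (2 * (cmod a * exp (cmod b)))"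
proof -
  define F where "F = exp (cmod b)"
  have F0: "0 \<le> F" by (simp add: F_def)
  have e2: "2 \<le> exp (1::real)" using exp_ge_add_one_self[of 1] by simp
  have eps1: "2 * \<epsilon> \<le> 1"
  proof -
    have "\<epsilon> * exp 1 \<le> 1" using eE by (simp add: field_simps)
    moreover have "\<epsilon> * 2 \<le> \<epsilon> * exp 1" using e2 e0 by (intro mult_left_mono) simp_all
    ultimately show ?thesis by linarith
  qed
  have a': "cmod a' \<le> exp \<epsilon> * cmod a"
  proof -
    have "cmod a' \<le> cmod a + cmod (a - a')" using norm_triangle_sub[of a' a]
      by (simp add: norm_minus_commute)
    also have "\<dots> \<le> (1 + \<epsilon>) * cmod a" using ha by (simp add: algebra_simps)
    also have "\<dots> \<le> exp \<epsilon> * cmod a" by (intro mult_right_mono) simp_all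
    finally show ?thesis .
  qed
  have b': "exp (cmod b') \<le> exp \<epsilon> * F"
  proof -
    have "cmod b' \<le> \<epsilon> + cmod b" using hb norm_triangle_sub[of b' b]
      by (simp add: norm_minus_commute)
    then show ?thesis by (simp add: F_def flip: exp_add)
  qed
  have "cmod a' * exp (cmod b') \<le> (exp \<epsilon> * cmod a) * (exp \<epsilon> * F)"
    by (intro mult_mono a' b') simp_all
  also have "\<dots> = exp (2 * \<epsilon>) * (cmod a * F)" by (simp add: algebra_simps flip: exp_add)
  also have "\<dots> \<le> exp 1 * (cmod a * F)" using eps1 F0 by (intro mult_right_mono) simp_all
  finally have k: "cmod a' * exp (cmod b') \<le> exp 1 * (cmod a * F)" .
  have s2': "sqrt 2 \<le> sqrt ((142/100)\<^sup>2)" by (rule real_sqrt_le_mono) (simp add: power2_eq_square)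
  then have s2: "sqrt 2 \<le> 142/100" by simp
  have c: "exp 1 * sqrt 2 / 2 \<le> (2::real)"
  proof -
    have "exp 1 * sqrt 2 \<le> (272/100) * (142/100)"
      using e_less_272 s2 by (intro mult_mono) simp_all
    then show ?thesis by simp
  qed
  have "opnorm (Pm a' b') \<le> exp (cmod a' * exp (cmod b') * sqrt 2 / 2)" by (rule opnorm_Pm)
  also have "\<dots> \<le> exp (exp 1 * (cmod a * F) * sqrt 2 / 2)"
    using k by (simp add: divide_right_mono mult_right_mono)
  also have "\<dots> \<le> exp (2 * (cmod a * F))"
  proof -
    have "exp 1 * (cmod a * F) * sqrt 2 / 2 = (exp 1 * sqrt 2 / 2) * (cmod a * F)" by simp
    also have "\<dots> \<le> 2 * (cmod a * F)" using c F0 by (intro mult_right_mono) simp_all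
    finally show ?thesis by simp
  qed
  finally show ?thesis by (simp add: F_def)
qed

lemma Pm_P: "opnorm (Pm a b) \<le> exp (2 * (cmod a * exp (cmod b)))"
proof -
  have "opnorm (Pm a b) \<le> exp (cmod a * exp (cmod b) * sqrt 2 / 2)" by (rule opnorm_Pm)
  also have "\<dots> \<le> exp (2 * (cmod a * exp (cmod b)))"
  proof -
    have "sqrt 2 / 2 \<le> (2::real)" using real_sqrt_le_mono[of 2 "2\<^sup>2"] by simp
    then have "(cmod a * exp (cmod b)) * (sqrt 2 / 2) \<le> (cmod a * exp (cmod b)) * 2"
      by (intro mult_left_mono) simp_all
    then show ?thesis by (simp add: mult.commute)
  qed
  finally show ?thesis .
qed

lemma foldr_mult: "foldr (\<lambda>i M. f i ** M) xs N = foldr (\<lambda>i M. f i ** M) xs (mat 1) ** (N::cmat)"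
  by (induction xs) (simp_all add: matrix_mul_assoc)

lemma oprod_0: "oprod f 0 = mat 1" by (simp add: oprod_def)

lemma oprod_Suc: "oprod f (Suc n) = oprod f n ** f (Suc n)"
proof -
  have "[1..<Suc n + 1] = [1..<n+1] @ [n+1]" by simp
  then show ?thesis unfolding oprod_def by (simp add: foldr_mult[of f _ "f (Suc n)"])
qed

lemma abel3: "a - b + (b - c) = a - (c::'a::ab_group_add)" by (simp add: algebra_simps)

lemma opnorm_zero: "opnorm 0 = 0"
proof -
  have "(*v) (0::cmat) = (\<lambda>x. 0)" by (rule ext) simp
  then show ?thesis unfolding opnorm_def using onorm_zero by simp
qed

lemma tele:
  assumes "\<And>i. i \<in> {1..n} \<Longrightarrow> opnorm (f i) \<le> exp (c i)"
    and "\<And>i. i \<in> {1..n} \<Longrightarrow> opnorm (g i) \<le> exp (c i)"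
    and "\<And>i. i \<in> {1..n} \<Longrightarrow> opnorm (f i - g i) \<le> d i"
    and "\<And>i. i \<in> {1..n} \<Longrightarrow> 0 \<le> c i"
  shows "opnorm (oprod g n) \<le> exp (\<Sum>i=1..n. c i) \<and>
     opnorm (oprod f n - oprod g n) \<le> exp (\<Sum>i=1..n. c i) * (\<Sum>i=1..n. d i)"
  using assms
proof (induction n)
  case 0
  then show ?case by (simp add: oprod_0 opnorm_one opnorm_zero)
next
  case (Suc n)
  let ?S = "\<Sum>i=1..n. c i" and ?D = "\<Sum>i=1..n. d i"
  have IH: "opnorm (oprod g n) \<le> exp ?S" "opnorm (oprod f n - oprod g n) \<le> exp ?S * ?D"
    using Suc.IH Suc.prems by auto
  have fS: "opnorm (f (Suc n)) \<le> exp (c (Suc n))" and gS: "opnorm (g (Suc n)) \<le> exp (c (Suc n))"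
    and dS: "opnorm (f (Suc n) - g (Suc n)) \<le> d (Suc n)" and cS: "0 \<le> c (Suc n)"
    using Suc.prems by auto
  have sumS: "(\<Sum>i=1..Suc n. c i) = ?S + c (Suc n)" "(\<Sum>i=1..Suc n. d i) = ?D + d (Suc n)" by simp_all
  have D0: "0 \<le> ?D"
  proof -
    have "\<forall>i\<in>{1..n}. 0 \<le> d i" using Suc.prems(3) opnorm_nonneg by (meson atLeastAtMost_iff le_SucI order_trans)
    then show ?thesis by (meson sum_nonneg)
  qed
  have d0: "0 \<le> d (Suc n)" using dS opnorm_nonneg order_trans by blast
  have g: "opnorm (oprod g (Suc n)) \<le> exp (?S + c (Suc n))"
  proof -
    have "opnorm (oprod g (Suc n)) \<le> opnorm (oprod g n) * opnorm (g (Suc n))"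
      unfolding oprod_Suc by (rule opnorm_mult)
    also have "\<dots> \<le> exp ?S * exp (c (Suc n))" by (intro mult_mono IH gS opnorm_nonneg) simp
    finally show ?thesis by (simp add: exp_add)
  qed
  have "oprod f (Suc n) - oprod g (Suc n) = (oprod f n - oprod g n) ** f (Suc n) + oprod g n ** (f (Suc n) - g (Suc n))"
    unfolding oprod_Suc by (simp only: matrix_sub_ldistrib matrix_sub_rdistrib abel3)
  then have "opnorm (oprod f (Suc n) - oprod g (Suc n)) \<le> opnorm ((oprod f n - oprod g n) ** f (Suc n)) + opnorm (oprod g n ** (f (Suc n) - g (Suc n)))"
    using opnorm_add by simp
  also have "\<dots> \<le> opnorm (oprod f n - oprod g n) * opnorm (f (Suc n)) + opnorm (oprod g n) * opnorm (f (Suc n) - g (Suc n))"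
    by (rule add_mono; rule opnorm_mult)
  also have "\<dots> \<le> (exp ?S * ?D) * exp (c (Suc n)) + exp ?S * d (Suc n)"
    using D0 by (intro add_mono mult_mono IH fS dS opnorm_nonneg mult_nonneg_nonneg) simp_all
  also have "\<dots> \<le> exp (?S + c (Suc n)) * (?D + d (Suc n))"
  proof -
    have "exp ?S * d (Suc n) \<le> exp ?S * exp (c (Suc n)) * d (Suc n)"
      using cS d0 by (intro mult_right_mono) simp_all
    then show ?thesis by (simp add: exp_add algebra_simps)
  qed
  finally show ?case using g sumS by simp
qed

theorem theoremA1:
  fixes a b a' b' :: "nat \<Rightarrow> complex" and n :: nat and A B \<epsilon> :: real
  assumes "A > 0" and "B > 0" and "\<epsilon> > 0"
    and "\<epsilon> < min (1 / A) (1 / exp 1)"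
    and "(\<Sum>i=1..n. cmod (a i) * exp (cmod (b i))) \<le> B"
    and "\<forall>i\<in>{1..n}. 2 * cmod (a i) * exp (cmod (b i) + 1) \<le> A"
    and "\<forall>i\<in>{1..n}. cmod (b i - b' i) < \<epsilon>"
    and "\<forall>i\<in>{1..n}. cmod (a i - a' i) < \<epsilon> * cmod (a i)"
  shows "opnorm (oprod (\<lambda>i. mflow Ym (b i) ** mflow Xm (a i) ** mflow Ym (- b i)) n
              - oprod (\<lambda>i. mflow Ym (b' i) ** mflow Xm (a' i) ** mflow Ym (- b' i)) n)
         \<le> 12 * exp (A + 2 * B) * B * \<epsilon>"
proof -
  note A0 = assms(1) and B0 = assms(2) and e0 = assms(3) and emin = assms(4)
    and sumB = assms(5) and hA = assms(6) and hb = assms(7) and ha = assms(8)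
  have eqf: "(\<lambda>i. mflow Ym (b i) ** mflow Xm (a i) ** mflow Ym (- b i)) = (\<lambda>i. Pm (a i) (b i))"
    "(\<lambda>i. mflow Ym (b' i) ** mflow Xm (a' i) ** mflow Ym (- b' i)) = (\<lambda>i. Pm (a' i) (b' i))"
    by (simp_all add: Pm_def)
  have eE: "\<epsilon> \<le> 1 / exp 1" using emin by simp
  have e2: "2 \<le> exp (1::real)" using exp_ge_add_one_self[of 1] by simp
  have eh: "\<epsilon> \<le> 1/2"
  proof -
    have "\<epsilon> * exp 1 \<le> 1" using eE by (simp add: field_simps)
    moreover have "\<epsilon> * 2 \<le> \<epsilon> * exp 1" using e2 e0 by (intro mult_left_mono) simp_all
    ultimately show ?thesis by linarith
  qed
  define c where "c i = 2 * (cmod (a i) * exp (cmod (b i)))" for i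
  define d where "d i = 5 * \<epsilon> * (cmod (a i) * exp (cmod (b i))) * exp A" for i
  have aA: "cmod (a i) \<le> A" if i: "i \<in> {1..n}" for i
  proof -
    have "cmod (a i) * 1 \<le> 2 * cmod (a i) * exp (cmod (b i) + 1)"
      by (intro mult_mono) (simp_all add: add_increasing)
    moreover have "2 * cmod (a i) * exp (cmod (b i) + 1) \<le> A" using hA i by blast
    ultimately show ?thesis by simp
  qed
  have T: "opnorm (oprod (\<lambda>i. Pm (a' i) (b' i)) n) \<le> exp (\<Sum>i=1..n. c i) \<and>
     opnorm (oprod (\<lambda>i. Pm (a i) (b i)) n - oprod (\<lambda>i. Pm (a' i) (b' i)) n) \<le> exp (\<Sum>i=1..n. c i) * (\<Sum>i=1..n. d i)"
  proof (rule tele)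
    fix i assume i: "i \<in> {1..n}"
    have ha': "cmod (a i - a' i) \<le> \<epsilon> * cmod (a i)" using ha i by (simp add: less_imp_le)
    have hb': "cmod (b i - b' i) \<le> \<epsilon>" using hb i by (simp add: less_imp_le)
    show "opnorm (Pm (a i) (b i)) \<le> exp (c i)" unfolding c_def by (rule Pm_P)
    show "opnorm (Pm (a' i) (b' i)) \<le> exp (c i)" unfolding c_def
      by (rule Pm_Q[OF ha' hb' less_imp_le[OF e0] eE])
    show "0 \<le> c i" by (simp add: c_def)
    have "opnorm (Pm (a i) (b i) - Pm (a' i) (b' i)) \<le> 5 * \<epsilon> * cmod (a i) * exp (cmod (b i)) * exp (cmod (a i))"
      by (rule Pm_diff[OF ha' hb' less_imp_le[OF e0] eh])
    also have "\<dots> \<le> d i" unfolding d_def using aA[OF i] e0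
      by (simp add: mult.assoc mult_left_mono)
    finally show "opnorm (Pm (a i) (b i) - Pm (a' i) (b' i)) \<le> d i" .
  qed
  have sc: "(\<Sum>i=1..n. c i) \<le> 2 * B" unfolding c_def using sumB by (simp add: sum_distrib_left[symmetric])
  have sd: "(\<Sum>i=1..n. d i) \<le> 5 * \<epsilon> * exp A * B"
  proof -
    have "(\<Sum>i=1..n. d i) = 5 * \<epsilon> * exp A * (\<Sum>i=1..n. cmod (a i) * exp (cmod (b i)))"
      unfolding d_def by (simp add: sum_distrib_left sum_distrib_right algebra_simps)
    also have "\<dots> \<le> 5 * \<epsilon> * exp A * B" using sumB e0 by (intro mult_left_mono) simp_all
    finally show ?thesis .
  qed
  have sd0: "0 \<le> (\<Sum>i=1..n. d i)" unfolding d_def using e0 by (intro sum_nonneg) simp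
  have "opnorm (oprod (\<lambda>i. Pm (a i) (b i)) n - oprod (\<lambda>i. Pm (a' i) (b' i)) n)
      \<le> exp (\<Sum>i=1..n. c i) * (\<Sum>i=1..n. d i)" using T by blast
  also have "\<dots> \<le> exp (2 * B) * (5 * \<epsilon> * exp A * B)"
    using sc sd sd0 by (intro mult_mono) simp_all
  also have "\<dots> \<le> 12 * exp (A + 2 * B) * B * \<epsilon>"
  proof -
    have "exp (2 * B) * (5 * \<epsilon> * exp A * B) = 5 * (exp (A + 2 * B) * B * \<epsilon>)"
      by (simp add: exp_add algebra_simps)
    also have "\<dots> \<le> 12 * (exp (A + 2 * B) * B * \<epsilon>)"
      using B0 e0 by (intro mult_right_mono) simp_all
    finally show ?thesis by (simp add: mult.assoc)
  qed
  finally show ?thesis unfolding eqf .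
qed

end
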